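(* Let $\mathcal{H}$, $A$, $B$, $c$, $d$, $\Omega$, $W_\Omega(T)$ and $W_{\partial\Omega}(T)$ be as in the context. Then (i) $W_\Omega(T)\cap i\mathbb{R}=W_{\partial\Omega}(T)\cap i\mathbb{R}$; (ii) $\partial W_\Omega(T)\setminus i\mathbb{R}=W_{\partial\Omega}(T)\setminus i\mathbb{R}$.
   Context: Let $\mathcal{H}$ be a Hilbert space, $A$ a selfadjoint (possibly unbounded) operator in $\mathcal{H}$ and $B$ a nonzero bounded selfadjoint operator in $\mathcal{H}$. Let $c\ge 0$ and $d>0$ be real numbers, $\theta:=\sqrt{c-d^2/4}$ (principal square root) and $\delta_\pm:=\pm\theta-id/2$, the zeros of $c-id\omega-\omega^2$. For $u\in\operatorname{dom}A\setminus\{0\}$ the numerical ranges are $W(A)=\{(Au,u)/(u,u)\}$, $W(B)=\{(Bu,u)/(u,u)\}\subset\mathbb{R}$. For real $\alpha,\beta$ let $p_{(\alpha,\beta)}(\omega):=(\alpha-\omega^2)(c-id\omega-\omega^2)-\beta\omega^2$, and let $r_1,\dots,r_4:\mathbb{R}^2\to\mathbb{C}$ denote its four roots, labelled so that each $r_n$ is continuous in $(\alpha,\beta)$; they are extended to $\overline{\mathbb{R}}\times\mathbb{R}$, where $\overline{\mathbb{R}}=\mathbb{R}\cup\{\pm\infty\}$, with values in the Riemann sphere $\overline{\mathbb{C}}=\mathbb{C}\cup\{\infty\}$, by taking limits (as $\alpha\to\pm\infty$ the roots tend to $\delta_+,\delta_-$ and to $\infty$ twice). For $X\subset\overline{\mathbb{R}}\times\mathbb{R}$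 put $W_X(T):=\bigcup_{n=1}^4\bigcup_{(\alpha,\beta)\in X}r_n(\alpha,\beta)\subset\overline{\mathbb{C}}$. Let $\Omega:=\overline{W(A)}\times\overline{W(B)}$, where $\overline{W(A)}$ is the closure in $\overline{\mathbb{R}}$ (containing $\pm\infty$ when $W(A)$ is unbounded above/below). $W_\Omega(T)$ is an enclosure of the numerical range of $T(\omega)=A-\omega^2-\frac{\omega^2}{c-id\omega-\omega^2}B$, and $W_{\partial\Omega}(T)=\bigcup_{n}r_n(\partial\Omega)$, where $\partial\Omega$ is the boundary of the rectangle $\Omega$. *)

theory Defs
  imports "HOL-Analysis.Analysis" "HOL-Library.Extended_Real"
begin

text \<open>The extended complex plane (Riemann sphere): Some z is the finite point z, None is infinity.\<close>
type_synonym ecomplex = "complex option"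

definition riemann_sphere :: "ecomplex topology" where
  "riemann_sphere = topology (\<lambda>U. open {z. Some z \<in> U} \<and>
      (None \<in> U \<longrightarrow> (\<exists>R. \<forall>z. R < norm z \<longrightarrow> Some z \<in> U)))"

definition imag_axis :: "ecomplex set" where
  "imag_axis = {Some z | z. Re z = 0}"

definition theta :: "real \<Rightarrow> real \<Rightarrow> complex" where
  "theta c d = csqrt (complex_of_real (c - d\<^sup>2 / 4))"

definition delta_plus :: "real \<Rightarrow> real \<Rightarrow> complex" where
  "delta_plus c d = theta c d - \<i> * complex_of_real (d / 2)"

definition delta_minus :: "real \<Rightarrow> real \<Rightarrow> complex" where
  "delta_minus c d = - theta c d - \<i> * complex_of_real (d / 2)"

definition pT :: "real \<Rightarrow> real \<Rightarrow> real \<Rightarrow> real \<Rightarrow> complex \<Rightarrow> complex" where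
  "pT c d \<alpha> \<beta> \<omega> = (complex_of_real \<alpha> - \<omega>\<^sup>2) *
       (complex_of_real c - \<i> * complex_of_real d * \<omega> - \<omega>\<^sup>2) - complex_of_real \<beta> * \<omega>\<^sup>2"

text \<open>The set {r_1(alpha,beta),...,r_4(alpha,beta)} of roots, extended to alpha = +-infinity
  by the limiting values delta_+, delta_-, infinity.\<close>
definition roots_at :: "real \<Rightarrow> real \<Rightarrow> ereal \<Rightarrow> real \<Rightarrow> ecomplex set" where
  "roots_at c d \<alpha> \<beta> =
     (if \<bar>\<alpha>\<bar> = \<infinity> then {Some (delta_plus c d), Some (delta_minus c d), None}
      else Some ` {\<omega>. pT c d (real_of_ereal \<alpha>) \<beta> \<omega> = 0})"

definition WX :: "real \<Rightarrow> real \<Rightarrow> (ereal \<times> real) set \<Rightarrow> ecomplex set" where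
  "WX c d X = (\<Union>(\<alpha>, \<beta>) \<in> X. roots_at c d \<alpha> \<beta>)"

definition rect_boundary :: "ereal set \<Rightarrow> real set \<Rightarrow> (ereal \<times> real) set" where
  "rect_boundary I J = ({Inf I, Sup I} \<times> J) \<union> (I \<times> {Inf J, Sup J})"

end

theory Submission
  imports Defs "HOL-Complex_Analysis.Complex_Analysis"
begin

definition rsP :: "ecomplex set \<Rightarrow> bool" where
  "rsP U \<longleftrightarrow> open {z. Some z \<in> U} \<and> (None \<in> U \<longrightarrow> (\<exists>R. \<forall>z. R < norm z \<longrightarrow> Some z \<in> U))"

lemma rs_istop0: "istopology rsP"
proof -
  have A: "rsP (S \<inter> T)" if S: "rsP S" and T: "rsP T" for S T
  proof -
    have "{z. Some z \<in> S \<inter> T} = {z. Some z \<in> S} \<inter> {z. Some z \<in> T}" by auto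
    then have "open {z. Some z \<in> S \<inter> T}" using S T by (simp add: open_Int rsP_def)
    moreover have "\<exists>R. \<forall>z. R < norm z \<longrightarrow> Some z \<in> S \<inter> T" if N: "None \<in> S \<inter> T"
    proof -
      obtain R1 R2 where "\<forall>z. R1 < norm z \<longrightarrow> Some z \<in> S" "\<forall>z. R2 < norm z \<longrightarrow> Some z \<in> T"
        using S T N unfolding rsP_def by auto
      then show ?thesis by (intro exI[of _ "max R1 R2"]) auto
    qed
    ultimately show ?thesis unfolding rsP_def by blast
  qed
  have B: "rsP (\<Union>K)" if K: "\<forall>S\<in>K. rsP S" for K
  proof -
    have "{z. Some z \<in> \<Union>K} = (\<Union>S\<in>K. {z. Some z \<in> S})" by auto
    then have "open {z. Some z \<in> \<Union>K}" using K by (auto intro!: open_UN simp: rsP_def)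
    moreover have "None \<in> \<Union>K \<longrightarrow> (\<exists>R. \<forall>z. R < norm z \<longrightarrow> Some z \<in> \<Union>K)"
    proof
      assume "None \<in> \<Union>K"
      then obtain S where S: "S \<in> K" "None \<in> S" by blast
      then have "rsP S" using K by blast
      then obtain R where "\<forall>z. R < norm z \<longrightarrow> Some z \<in> S" using S(2) unfolding rsP_def by blast
      then show "\<exists>R. \<forall>z. R < norm z \<longrightarrow> Some z \<in> \<Union>K" using S(1) by blast
    qed
    ultimately show ?thesis unfolding rsP_def by blast
  qed
  show ?thesis unfolding istopology_def using A B by blast
qed

lemma rs_istop: "istopology (\<lambda>U::ecomplex set. open {z. Some z \<in> U} \<and>
      (None \<in> U \<longrightarrow> (\<exists>R. \<forall>z. R < norm z \<longrightarrow> Some z \<in> U)))"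
  using rs_istop0 unfolding rsP_def[abs_def] .

lemma rs_open: "openin riemann_sphere U \<longleftrightarrow> open {z. Some z \<in> U} \<and>
      (None \<in> U \<longrightarrow> (\<exists>R. \<forall>z. R < norm z \<longrightarrow> Some z \<in> U))"
proof -
  have "openin riemann_sphere = (\<lambda>U::ecomplex set. open {z. Some z \<in> U} \<and>
      (None \<in> U \<longrightarrow> (\<exists>R. \<forall>z. R < norm z \<longrightarrow> Some z \<in> U)))"
    unfolding riemann_sphere_def by (rule topology_inverse'[OF rs_istop])
  then show ?thesis by simp
qed

lemma rs_topspace: "topspace riemann_sphere = UNIV"
  unfolding topspace_def using rs_open[of UNIV] by auto

lemma rs_open_Some: "open T \<Longrightarrow> openin riemann_sphere (Some ` T)"
  unfolding rs_open by (auto simp: image_iff)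

lemma rs_closure_Some: "Some z \<in> riemann_sphere closure_of S \<Longrightarrow> z \<in> closure {w. Some w \<in> S}"
  unfolding closure_approachable
proof (intro allI impI)
  fix e :: real assume a: "Some z \<in> riemann_sphere closure_of S" and e: "0 < e"
  have o: "openin riemann_sphere (Some ` ball z e)" by (rule rs_open_Some) simp
  have m: "Some z \<in> Some ` ball z e" using e by simp
  from a have "\<forall>T. Some z \<in> T \<and> openin riemann_sphere T \<longrightarrow> (\<exists>y. y \<in> S \<and> y \<in> T)"
    by (simp add: in_closure_of)
  then obtain y where "y \<in> S" "y \<in> Some ` ball z e" using o m by blast
  then show "\<exists>x\<in>{w. Some w \<in> S}. dist x z < e" by (auto simp: dist_commute)
qed

lemma rs_closure_None: "None \<in> riemann_sphere closure_of S \<Longrightarrow> None \<notin> S \<Longrightarrow> \<exists>w. R < norm w \<and> Some w \<in> S"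
proof -
  assume a: "None \<in> riemann_sphere closure_of S" and nS: "None \<notin> S"
  let ?U = "insert None (Some ` {w::complex. R < norm w})"
  have "{z. Some z \<in> ?U} = {w. R < norm w}" by auto
  moreover have "open {w::complex. R < norm w}" by (intro open_Collect_less continuous_intros)
  ultimately have o: "openin riemann_sphere ?U" unfolding rs_open by auto
  from a have "\<forall>T. None \<in> T \<and> openin riemann_sphere T \<longrightarrow> (\<exists>y. y \<in> S \<and> y \<in> T)"
    by (simp add: in_closure_of)
  then obtain y where "y \<in> S" "y \<in> ?U" using o by blast
  then show ?thesis using nS by auto
qed

lemma rs_interior_Some: "Some z \<in> riemann_sphere interior_of S \<Longrightarrow> \<exists>r>0. \<forall>w\<in>ball z r. Some w \<in> S"
proof -
  assume "Some z \<in> riemann_sphere interior_of S"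
  then obtain T where T: "openin riemann_sphere T" "Some z \<in> T" "T \<subseteq> S"
    unfolding interior_of_def by auto
  then have "open {w. Some w \<in> T}" "z \<in> {w. Some w \<in> T}" unfolding rs_open by auto
  then obtain r where r: "r > 0" "ball z r \<subseteq> {w. Some w \<in> T}" using open_contains_ball_eq by metis
  have "\<forall>w\<in>ball z r. Some w \<in> S" using r(2) T(3) by blast
  then show ?thesis using r(1) by blast
qed

lemma rs_interior_None: "None \<in> riemann_sphere interior_of S \<Longrightarrow> \<exists>R. \<forall>w. R < norm w \<longrightarrow> Some w \<in> S"
proof -
  assume "None \<in> riemann_sphere interior_of S"
  then obtain T where T: "openin riemann_sphere T" "None \<in> T" "T \<subseteq> S"
    unfolding interior_of_def by auto
  then obtain R where "\<forall>w. R < norm w \<longrightarrow> Some w \<in> T" unfolding rs_open by meson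
  then show ?thesis using T(3) by blast
qed

lemma rs_interior_SomeI:
  assumes "0 < r" "\<And>w. w \<in> ball z r \<Longrightarrow> Some w \<in> S"
  shows "Some z \<in> riemann_sphere interior_of S"
proof -
  have "openin riemann_sphere (Some ` ball z r)" by (rule rs_open_Some) simp
  moreover have "Some z \<in> Some ` ball z r" using assms(1) by simp
  moreover have "Some ` ball z r \<subseteq> S" using assms(2) by blast
  ultimately show ?thesis using interior_of_maximal[of "Some ` ball z r" S riemann_sphere] by blast
qed


definition qf :: "real \<Rightarrow> real \<Rightarrow> complex \<Rightarrow> complex" where
  "qf c d w = complex_of_real c - \<i> * complex_of_real d * w - w\<^sup>2"

lemma pT_q: "pT c d a b w = (complex_of_real a - w\<^sup>2) * qf c d w - complex_of_real b * w\<^sup>2"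
  by (simp add: pT_def qf_def)

lemma theta_sq: "(theta c d)\<^sup>2 = complex_of_real (c - d\<^sup>2 / 4)"
  by (simp add: theta_def)

lemma qf_factor: "qf c d w = - ((w - delta_plus c d) * (w - delta_minus c d))"
proof -
  define t where "t = theta c d"
  have t2: "t * t = complex_of_real c - (complex_of_real d)^2 / 4"
    using theta_sq[of c d] unfolding t_def power2_eq_square by simp
  have "- ((w - delta_plus c d) * (w - delta_minus c d)) =
        - ((w + \<i> * complex_of_real (d/2))^2 - t * t)"
    unfolding delta_plus_def delta_minus_def t_def by (simp add: algebra_simps power2_eq_square)
  also have "\<dots> = qf c d w"
    unfolding t2 qf_def by (simp add: algebra_simps power2_eq_square field_simps)
  finally show ?thesis by simp
qed

lemma qf_zero_iff: "qf c d w = 0 \<longleftrightarrow> w = delta_plus c d \<or> w = delta_minus c d"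
  unfolding qf_factor by simp

lemma ereal_abs_inf: "\<bar>\<alpha>::ereal\<bar> = \<infinity> \<longleftrightarrow> \<alpha> = \<infinity> \<or> \<alpha> = -\<infinity>"
  by (cases \<alpha>) auto

lemma WX_Some: "Some w \<in> WX c d X \<longleftrightarrow>
   (\<exists>a b. (ereal a, b) \<in> X \<and> pT c d a b w = 0) \<or>
   ((w = delta_plus c d \<or> w = delta_minus c d) \<and> (\<exists>\<alpha> b. (\<alpha>, b) \<in> X \<and> (\<alpha> = \<infinity> \<or> \<alpha> = -\<infinity>)))"
  (is "_ \<longleftrightarrow> ?R")
proof -
  have r: "Some w \<in> roots_at c d \<alpha> b \<longleftrightarrow>
     (if \<alpha> = \<infinity> \<or> \<alpha> = -\<infinity> then w = delta_plus c d \<or> w = delta_minus c d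
      else pT c d (real_of_ereal \<alpha>) b w = 0)" for \<alpha> b
    unfolding roots_at_def ereal_abs_inf by auto
  have "Some w \<in> WX c d X \<longleftrightarrow> (\<exists>p\<in>X. Some w \<in> roots_at c d (fst p) (snd p))"
    unfolding WX_def by (rule iffI; force)
  also have "\<dots> \<longleftrightarrow> ?R"
  proof
    assume "\<exists>p\<in>X. Some w \<in> roots_at c d (fst p) (snd p)"
    then obtain \<alpha> b where p: "(\<alpha>, b) \<in> X" "Some w \<in> roots_at c d \<alpha> b" by auto
    show ?R
    proof (cases \<alpha>)
      case (real r')
      then show ?R using p r[of \<alpha> b] by auto
    qed (use p r in auto)
  next
    assume ?R
    then show "\<exists>p\<in>X. Some w \<in> roots_at c d (fst p) (snd p)"
    proof
      assume "\<exists>a b. (ereal a, b) \<in> X \<and> pT c d a b w = 0"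
      then obtain a b where "(ereal a, b) \<in> X" "pT c d a b w = 0" by blast
      then show ?thesis using r[of "ereal a" b] by force
    next
      assume h: "(w = delta_plus c d \<or> w = delta_minus c d) \<and> (\<exists>\<alpha> b. (\<alpha>, b) \<in> X \<and> (\<alpha> = \<infinity> \<or> \<alpha> = -\<infinity>))"
      then obtain \<alpha> b where "(\<alpha>, b) \<in> X" "\<alpha> = \<infinity> \<or> \<alpha> = -\<infinity>" by blast
      then show ?thesis using h r[of \<alpha> b] by force
    qed
  qed
  finally show ?thesis .
qed

lemma WX_None: "None \<in> WX c d X \<longleftrightarrow> (\<exists>\<alpha> b. (\<alpha>, b) \<in> X \<and> (\<alpha> = \<infinity> \<or> \<alpha> = -\<infinity>))"
  unfolding WX_def roots_at_def ereal_abs_inf by (rule iffI; force split: if_splits)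

lemma WX_mono: "X \<subseteq> Y \<Longrightarrow> WX c d X \<subseteq> WX c d Y"
  unfolding WX_def by blast

lemma closure_WB:
  fixes WB :: "real set"
  assumes "is_interval WB" "bounded WB" "WB \<noteq> {}"
  shows "closure WB = {Inf WB..Sup WB}"
proof
  have bb: "bdd_below WB" "bdd_above WB"
    using assms(2) by (auto simp: bounded_imp_bdd_below bounded_imp_bdd_above)
  have "WB \<subseteq> {Inf WB..Sup WB}" using bb by (auto intro: cInf_lower cSup_upper)
  then show "closure WB \<subseteq> {Inf WB..Sup WB}" by (rule closure_minimal) simp
  show "{Inf WB..Sup WB} \<subseteq> closure WB"
  proof
    fix x assume x: "x \<in> {Inf WB..Sup WB}"
    show "x \<in> closure WB"
    proof (cases "x = Inf WB \<or> x = Sup WB")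
      case True
      then show ?thesis using closure_contains_Inf[OF assms(3) bb(1)]
          closure_contains_Sup[OF assms(3) bb(2)] by auto
    next
      case False
      then have "Inf WB < x" "x < Sup WB" using x by auto
      then obtain u v where "u \<in> WB" "u < x" "v \<in> WB" "x < v"
        using cInf_lessD[OF assms(3)] less_cSupD[OF assms(3)] by metis
      then have "x \<in> WB" using mem_is_interval_1_I[OF assms(1)] by (meson less_imp_le)
      then show ?thesis using closure_subset by blast
    qed
  qed
qed

lemma closure_WA:
  fixes WA :: "real set"
  assumes "is_interval WA" "WA \<noteq> {}"
  shows "closure (ereal ` WA) = {Inf (ereal ` WA)..Sup (ereal ` WA)}"
proof
  let ?S = "ereal ` WA"
  have sub: "?S \<subseteq> {Inf ?S..Sup ?S}" by (auto intro!: Inf_lower Sup_upper)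
  then show A: "closure ?S \<subseteq> {Inf ?S..Sup ?S}" by (rule closure_minimal) simp
  have ne: "closure ?S \<noteq> {}" using assms(2) closure_subset by blast
  have cl: "closed (closure ?S)" by simp
  have "Inf (closure ?S) \<in> closure ?S" by (rule closed_contains_Inf_cl[OF cl ne])
  moreover have "Inf (closure ?S) = Inf ?S"
  proof (rule antisym)
    show "Inf (closure ?S) \<le> Inf ?S" by (rule Inf_superset_mono[OF closure_subset])
    show "Inf ?S \<le> Inf (closure ?S)" by (rule Inf_greatest) (use A in auto)
  qed
  ultimately have i: "Inf ?S \<in> closure ?S" by simp
  have "Sup (closure ?S) \<in> closure ?S" by (rule closed_contains_Sup_cl[OF cl ne])
  moreover have "Sup (closure ?S) = Sup ?S"
  proof (rule antisym)
    show "Sup ?S \<le> Sup (closure ?S)" by (rule Sup_subset_mono[OF closure_subset])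
    show "Sup (closure ?S) \<le> Sup ?S" by (rule Sup_least) (use A in auto)
  qed
  ultimately have s: "Sup ?S \<in> closure ?S" by simp
  show "{Inf ?S..Sup ?S} \<subseteq> closure ?S"
  proof
    fix x assume x: "x \<in> {Inf ?S..Sup ?S}"
    show "x \<in> closure ?S"
    proof (cases "x = Inf ?S \<or> x = Sup ?S")
      case True
      then show ?thesis using i s by auto
    next
      case False
      then have "Inf ?S < x" "x < Sup ?S" using x by auto
      then obtain u v where uv: "u \<in> WA" "ereal u < x" "v \<in> WA" "x < ereal v"
        unfolding Inf_less_iff less_Sup_iff by auto
      then obtain r where r: "x = ereal r" by (cases x) auto
      have "u \<le> r" "r \<le> v" using uv r by auto
      then have "r \<in> WA" by (rule mem_is_interval_1_I[OF assms(1) uv(1) uv(3)])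
      then show ?thesis using r closure_subset by blast
    qed
  qed
qed


lemma pT_expand: "pT c d a b w = w^4 + \<i> * of_real d * w^3 - of_real (a + c + b) * w\<^sup>2
    - \<i> * of_real (a * d) * w + of_real (a * c)"
  unfolding pT_def by (simp add: algebra_simps power2_eq_square power3_eq_cube power4_eq_xxxx)

lemma finite_roots_gen: "finite {w. (A - w\<^sup>2) * qf c d w - B * w\<^sup>2 = 0}"
proof -
  let ?P = "[:A * of_real c, - \<i> * A * of_real d, - (A + of_real c + B), \<i> * of_real d, 1:]"
  have "poly ?P w = (A - w\<^sup>2) * qf c d w - B * w\<^sup>2" for w
    unfolding qf_def by (simp add: algebra_simps power2_eq_square power3_eq_cube power4_eq_xxxx)
  moreover have "?P \<noteq> 0" by simp
  ultimately show ?thesis using poly_roots_finite[of ?P] by simp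
qed

lemma norm4: "norm (x - y - z + t) \<le> norm x + norm y + norm z + norm (t::complex)"
proof -
  have "norm (x - y - z + t) \<le> norm (x - y - z) + norm t" by (rule norm_triangle_ineq)
  also have "norm (x - y - z) \<le> norm (x - y) + norm z" by (rule norm_triangle_ineq4)
  also have "norm (x - y) \<le> norm x + norm y" by (rule norm_triangle_ineq4)
  finally show ?thesis by simp
qed

lemma cauchy_bound:
  assumes "norm w \<ge> 1 + \<bar>d\<bar> + \<bar>a + c + b\<bar> + \<bar>a * d\<bar> + \<bar>a * c\<bar>"
  shows "pT c d a b w \<noteq> 0"
proof
  assume h: "pT c d a b w = 0"
  let ?n = "norm w"
  have n1: "?n \<ge> 1" using assms by linarith
  have "w^4 = - (\<i> * of_real d * w^3 - of_real (a + c + b) * w\<^sup>2 - \<i> * of_real (a * d) * w + of_real (a * c))"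
    using h unfolding pT_expand by (simp add: algebra_simps)
  then have "?n^4 = norm (\<i> * of_real d * w^3 - of_real (a + c + b) * w\<^sup>2 - \<i> * of_real (a * d) * w + of_real (a * c))"
    by (metis norm_minus_cancel norm_power)
  also have "\<dots> \<le> \<bar>d\<bar> * ?n^3 + \<bar>a + c + b\<bar> * ?n^2 + \<bar>a * d\<bar> * ?n + \<bar>a * c\<bar>"
    using norm4[of "\<i> * of_real d * w^3" "of_real (a + c + b) * w\<^sup>2" "\<i> * of_real (a * d) * w" "of_real (a * c)"]
    by (simp add: norm_mult norm_power del: of_real_add of_real_mult)
  also have "\<dots> \<le> (\<bar>d\<bar> + \<bar>a + c + b\<bar> + \<bar>a * d\<bar> + \<bar>a * c\<bar>) * ?n^3"
  proof -
    have "?n^2 \<le> ?n^3" using n1 by (intro power_increasing) auto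
    moreover have "?n^1 \<le> ?n^3" using n1 by (intro power_increasing) auto
    moreover have "1 \<le> ?n^3" using n1 by (intro one_le_power) auto
    ultimately have h: "?n^2 \<le> ?n^3" "?n \<le> ?n^3" "1 \<le> ?n^3" by auto
    have e1: "\<bar>a + c + b\<bar> * ?n^2 \<le> \<bar>a + c + b\<bar> * ?n^3" by (rule mult_left_mono[OF h(1)]) simp
    have e2: "\<bar>a * d\<bar> * ?n \<le> \<bar>a * d\<bar> * ?n^3" by (rule mult_left_mono[OF h(2)]) simp
    have e3: "\<bar>a * c\<bar> * 1 \<le> \<bar>a * c\<bar> * ?n^3" by (rule mult_left_mono[OF h(3)]) simp
    show ?thesis by (simp only: distrib_right) (use e1 e2 e3 in linarith)
  qed
  also have "\<dots> < ?n * ?n^3"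
  proof (rule mult_strict_right_mono)
    show "0 < ?n^3" using n1 by (intro zero_less_power) linarith
  qed (use assms in linarith)
  also have "\<dots> = ?n^4" by (simp add: power_numeral_reduce)
  finally show False by simp
qed

lemma core_noroot:
  assumes d: "d \<noteq> 0" and x: "Re w \<noteq> 0" and q: "qf c d w \<noteq> 0"
    and qr: "qf c d w = of_real r * w\<^sup>2" and p: "pT c d a b w = 0"
  shows False
proof -
  have w0: "w \<noteq> 0" using x by auto
  have r0: "r \<noteq> 0" using q qr by auto
  from p have "w\<^sup>2 * ((of_real a - w\<^sup>2) * of_real r - of_real b) = 0"
    unfolding pT_q qr by (simp add: algebra_simps)
  then have e: "(of_real a - w\<^sup>2) * of_real r = of_real b" using w0 by simp
  have "w\<^sup>2 = of_real (a - b / r)"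
  proof -
    have "w\<^sup>2 * of_real r = of_real a * of_real r - of_real b" using e by (simp add: algebra_simps)
    then have "w\<^sup>2 = (of_real a * of_real r - of_real b) / of_real r" using r0 by (simp add: field_simps)
    also have "\<dots> = of_real (a - b / r)" using r0 by (simp add: field_simps)
    finally show ?thesis .
  qed
  then have "Im (w\<^sup>2) = 0" by simp
  then have "2 * Re w * Im w = 0" by (auto simp: power2_eq_square)
  then have iw: "Im w = 0" using x by auto
  have "Im (qf c d w) = - d * Re w" unfolding qf_def using iw by (simp add: power2_eq_square)
  moreover have "Im (qf c d w) = 0" using qr iw by (simp add: power2_eq_square)
  ultimately show False using d x by simp
qed

lemma root_unique:
  assumes d: "d \<noteq> 0" and x: "Re w \<noteq> 0" and q: "qf c d w \<noteq> 0"
    and p1: "pT c d a1 b1 w = 0" and p2: "pT c d a2 b2 w = 0"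
  shows "a1 = a2 \<and> b1 = b2"
proof -
  have w0: "w \<noteq> 0" using x by auto
  have diff: "of_real (a1 - a2) * qf c d w = of_real (b1 - b2) * w\<^sup>2"
    using p1 p2 unfolding pT_q by (simp add: algebra_simps)
  show ?thesis
  proof (cases "a1 = a2")
    case True
    then have "of_real (b1 - b2) * w\<^sup>2 = 0" using diff by simp
    then show ?thesis using True w0 by simp
  next
    case False
    then have "qf c d w = of_real ((b1 - b2) / (a1 - a2)) * w\<^sup>2"
      using diff by (simp add: field_simps)
    then show ?thesis using core_noroot[OF d x q _ p1] by blast
  qed
qed

definition Dc :: "real \<Rightarrow> real \<Rightarrow> complex \<Rightarrow> real" where
  "Dc c d w = Re (qf c d w) * (- Im (w\<^sup>2)) - Im (qf c d w) * (- Re (w\<^sup>2))"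

definition al :: "real \<Rightarrow> real \<Rightarrow> complex \<Rightarrow> real" where
  "al c d w = (Re (w\<^sup>2 * qf c d w) * (- Im (w\<^sup>2)) - Im (w\<^sup>2 * qf c d w) * (- Re (w\<^sup>2))) / Dc c d w"

definition be :: "real \<Rightarrow> real \<Rightarrow> complex \<Rightarrow> real" where
  "be c d w = (Re (qf c d w) * Im (w\<^sup>2 * qf c d w) - Im (qf c d w) * Re (w\<^sup>2 * qf c d w)) / Dc c d w"

lemma cramer2:
  fixes A1 B1 R1 A2 B2 R2 :: real
  assumes "A1 * B2 - A2 * B1 \<noteq> 0"
  shows "(R1 * B2 - R2 * B1) / (A1 * B2 - A2 * B1) * A1 + (A1 * R2 - A2 * R1) / (A1 * B2 - A2 * B1) * B1 = R1"
    "(R1 * B2 - R2 * B1) / (A1 * B2 - A2 * B1) * A2 + (A1 * R2 - A2 * R1) / (A1 * B2 - A2 * B1) * B2 = R2"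
proof -
  let ?D = "A1 * B2 - A2 * B1"
  have "(R1 * B2 - R2 * B1) / ?D * A1 + (A1 * R2 - A2 * R1) / ?D * B1
      = ((R1 * B2 - R2 * B1) * A1 + (A1 * R2 - A2 * R1) * B1) / ?D" by (simp add: add_divide_distrib)
  also have "(R1 * B2 - R2 * B1) * A1 + (A1 * R2 - A2 * R1) * B1 = R1 * ?D" by algebra
  finally show "(R1 * B2 - R2 * B1) / ?D * A1 + (A1 * R2 - A2 * R1) / ?D * B1 = R1" using assms by simp
  have "(R1 * B2 - R2 * B1) / ?D * A2 + (A1 * R2 - A2 * R1) / ?D * B2
      = ((R1 * B2 - R2 * B1) * A2 + (A1 * R2 - A2 * R1) * B2) / ?D" by (simp add: add_divide_distrib)
  also have "(R1 * B2 - R2 * B1) * A2 + (A1 * R2 - A2 * R1) * B2 = R2 * ?D" by algebra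
  finally show "(R1 * B2 - R2 * B1) / ?D * A2 + (A1 * R2 - A2 * R1) / ?D * B2 = R2" using assms by simp
qed

lemma pT_lin: "pT c d a b w = of_real a * qf c d w - of_real b * w\<^sup>2 - w\<^sup>2 * qf c d w"
  unfolding pT_q by (simp add: algebra_simps)

lemma cramer_root:
  assumes "Dc c d w \<noteq> 0"
  shows "pT c d (al c d w) (be c d w) w = 0"
proof -
  let ?A1 = "Re (qf c d w)" and ?A2 = "Im (qf c d w)" and ?B1 = "- Re (w\<^sup>2)" and ?B2 = "- Im (w\<^sup>2)"
    and ?R1 = "Re (w\<^sup>2 * qf c d w)" and ?R2 = "Im (w\<^sup>2 * qf c d w)"
  have D: "Dc c d w = ?A1 * ?B2 - ?A2 * ?B1" unfolding Dc_def by simp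
  have a: "al c d w = (?R1 * ?B2 - ?R2 * ?B1) / (?A1 * ?B2 - ?A2 * ?B1)" unfolding al_def D by simp
  have b: "be c d w = (?A1 * ?R2 - ?A2 * ?R1) / (?A1 * ?B2 - ?A2 * ?B1)" unfolding be_def D by simp
  have ne: "?A1 * ?B2 - ?A2 * ?B1 \<noteq> 0" using assms D by simp
  note c = cramer2[OF ne, of ?R1 ?R2]
  have re: "Re (pT c d x y w) = x * ?A1 + y * ?B1 - ?R1" for x y by (simp add: pT_lin)
  have im: "Im (pT c d x y w) = x * ?A2 + y * ?B2 - ?R2" for x y by (simp add: pT_lin)
  show ?thesis unfolding complex_eq_iff re im a b using c by simp
qed

lemma Dc_nonzero:
  assumes d: "d \<noteq> 0" and x: "Re w \<noteq> 0" and q: "qf c d w \<noteq> 0" and p: "pT c d a b w = 0"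
  shows "Dc c d w \<noteq> 0"
proof
  assume D0: "Dc c d w = 0"
  define v where "v = w\<^sup>2"
  have v0: "v \<noteq> 0" using x unfolding v_def by auto
  define s where "s = Re (qf c d w) * Re v + Im (qf c d w) * Im v"
  have D0': "Re (qf c d w) * (- Im v) - Im (qf c d w) * (- Re v) = 0"
    using D0 unfolding Dc_def v_def .
  have "qf c d w * cnj v = of_real s"
    using D0' unfolding complex_eq_iff s_def by (simp add: algebra_simps)
  then have "qf c d w * (cnj v * v) = of_real s * v" by (simp add: mult.assoc[symmetric])
  moreover have "cnj v * v = of_real ((cmod v)\<^sup>2)"
    by (metis complex_norm_square mult.commute)
  ultimately have "qf c d w * of_real ((cmod v)\<^sup>2) = of_real s * v" by simp
  then have "qf c d w = of_real (s / (cmod v)\<^sup>2) * v" using v0 by (simp add: field_simps)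
  then show False using core_noroot[OF d x q _ p] unfolding v_def by blast
qed

lemma Dc_formula: "Dc c d w = - Re w * (2 * c * Im w + d * ((Re w)\<^sup>2 + (Im w)\<^sup>2))"
  unfolding Dc_def qf_def by (simp add: power2_eq_square algebra_simps)

lemma isCont_Re'[continuous_intros]: "isCont f a \<Longrightarrow> isCont (\<lambda>x. Re (f x)) a"
  by (rule isCont_Re)
lemma isCont_Im'[continuous_intros]: "isCont f a \<Longrightarrow> isCont (\<lambda>x. Im (f x)) a"
  by (rule isCont_Im)

lemma isCont_Dc: "isCont (Dc c d) w"
  unfolding Dc_def qf_def by (intro continuous_intros)

lemma isCont_al: "Dc c d w \<noteq> 0 \<Longrightarrow> isCont (al c d) w"
  unfolding al_def using isCont_Dc[where c=c and d=d and w=w]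
  by (intro continuous_intros) (auto simp: qf_def)

lemma isCont_be: "Dc c d w \<noteq> 0 \<Longrightarrow> isCont (be c d) w"
  unfolding be_def using isCont_Dc[where c=c and d=d and w=w]
  by (intro continuous_intros) (auto simp: qf_def)


lemma pT_imag: "pT c d a b (\<i> * of_real y) = of_real ((a + y\<^sup>2) * (c + d * y + y\<^sup>2) + b * y\<^sup>2)"
  unfolding pT_def by (simp add: algebra_simps power2_eq_square)

lemma qf_imag: "qf c d (\<i> * of_real y) = of_real (c + d * y + y\<^sup>2)"
  unfolding qf_def by (simp add: algebra_simps power2_eq_square)

lemma rect_boundary_eq:
  fixes ia ib :: ereal and b1 b2 :: real
  assumes "ia \<le> ib" "b1 \<le> b2"
  shows "rect_boundary {ia..ib} {b1..b2} = ({ia, ib} \<times> {b1..b2}) \<union> ({ia..ib} \<times> {b1, b2})"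
  unfolding rect_boundary_def using assms by simp

locale wsetup =
  fixes c d :: real and ia ib :: ereal and b1 b2 :: real
  assumes c0: "c \<ge> 0" and d0: "d > 0" and iab: "ia \<le> ib" and ia_fin: "ia \<noteq> \<infinity>"
    and ib_fin: "ib \<noteq> -\<infinity>" and b12: "b1 \<le> b2"
begin

abbreviation "Om \<equiv> {ia..ib} \<times> {b1..b2}"
abbreviation "Bd \<equiv> rect_boundary {ia..ib} {b1..b2}"

lemma Bd_eq: "Bd = ({ia, ib} \<times> {b1..b2}) \<union> ({ia..ib} \<times> {b1, b2})"
  using rect_boundary_eq[OF iab b12] .

lemma Bd_sub: "Bd \<subseteq> Om"
  unfolding Bd_eq using iab b12 by auto

lemma inf_in_Bd:
  assumes "(\<alpha>, b) \<in> Om" "\<alpha> = \<infinity> \<or> \<alpha> = -\<infinity>"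
  shows "(\<alpha>, b) \<in> Bd"
proof -
  have "\<alpha> = ia \<or> \<alpha> = ib"
    using assms by (auto simp: ereal_infty_less_eq)
  then show ?thesis using assms(1) unfolding Bd_eq by auto
qed

lemma part_i:
  assumes S: "Some w \<in> WX c d Om" and re: "Re w = 0"
  shows "Some w \<in> WX c d Bd"
proof -
  from S[unfolded WX_Some] show ?thesis
  proof
    assume "(w = delta_plus c d \<or> w = delta_minus c d) \<and> (\<exists>\<alpha> b. (\<alpha>, b) \<in> Om \<and> (\<alpha> = \<infinity> \<or> \<alpha> = -\<infinity>))"
    then show ?thesis unfolding WX_Some using inf_in_Bd by blast
  next
    assume "\<exists>a b. (ereal a, b) \<in> Om \<and> pT c d a b w = 0"
    then obtain a b where ab: "(ereal a, b) \<in> Om" and p: "pT c d a b w = 0" by blast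
    define y where "y = Im w"
    have wy: "w = \<i> * of_real y" using re unfolding y_def complex_eq_iff by simp
    define Q where "Q = c + d * y + y\<^sup>2"
    have p': "(a + y\<^sup>2) * Q + b * y\<^sup>2 = 0" using p unfolding wy pT_imag Q_def of_real_eq_0_iff .
    have pt: "pT c d a' b' w = 0 \<longleftrightarrow> (a' + y\<^sup>2) * Q + b' * y\<^sup>2 = 0" for a' b'
      unfolding wy pT_imag Q_def of_real_eq_0_iff ..
    show ?thesis
    proof (cases "y = 0")
      case True
      then have "(ereal a, b1) \<in> Bd" using ab b12 unfolding Bd_eq by auto
      moreover have "pT c d a b1 w = 0" using p' True unfolding pt by simp
      ultimately show ?thesis unfolding WX_Some by blast
    next
      case y0: False
      show ?thesis
      proof (cases "Q = 0")
        case True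
        then have "b = 0" using p' y0 by simp
        then have bd: "(ib, 0) \<in> Bd" using ab iab unfolding Bd_eq by auto
        show ?thesis
        proof (cases ib)
          case (real r)
          have "pT c d r 0 w = 0" unfolding pt using True by simp
          then show ?thesis unfolding WX_Some using bd real by blast
        next
          case PInf
          have "qf c d w = 0" unfolding wy qf_imag using True Q_def by simp
          then have "w = delta_plus c d \<or> w = delta_minus c d" using qf_zero_iff by blast
          then show ?thesis unfolding WX_Some using bd PInf by blast
        next
          case MInf
          then show ?thesis using ib_fin by simp
        qed
      next
        case Q0: False
        define f where "f t = - y\<^sup>2 - t * y\<^sup>2 / Q" for t
        have pf: "pT c d (f t) t w = 0" for t
          unfolding pt f_def using Q0 by (simp add: field_simps)
        have fa: "f b = a" using p' Q0 unfolding f_def by (simp add: field_simps)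
        have cf: "continuous_on {b..b2} f" unfolding f_def using Q0 by (intro continuous_intros) auto
        have bJ: "b1 \<le> b" "b \<le> b2" using ab by auto
        have aI: "ia \<le> ereal a" "ereal a \<le> ib" using ab by auto
        consider "ia \<le> ereal (f b2) \<and> ereal (f b2) \<le> ib" | "ib < ereal (f b2)" | "ereal (f b2) < ia"
          by force
        then show ?thesis
        proof cases
          case 1
          then have "(ereal (f b2), b2) \<in> Bd" unfolding Bd_eq using b12 by auto
          then show ?thesis unfolding WX_Some using pf by blast
        next
          case 2
          then obtain r where r: "ib = ereal r" using aI by (cases ib) auto
          have "f b \<le> r" using aI r fa by simp
          moreover have "r \<le> f b2" using 2 r by simp
          ultimately obtain t where t: "b \<le> t" "t \<le> b2" "f t = r"
            using IVT'[OF _ _ bJ(2) cf] by blast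
          then have "(ib, t) \<in> Bd" unfolding Bd_eq using bJ by auto
          then show ?thesis unfolding WX_Some using pf[of t] t r by auto
        next
          case 3
          then obtain r where r: "ia = ereal r" using aI by (cases ia) auto
          have "r \<le> f b" using aI r fa by simp
          moreover have "f b2 \<le> r" using 3 r by simp
          ultimately obtain t where t: "b \<le> t" "t \<le> b2" "f t = r"
            using IVT2'[OF _ _ bJ(2) cf] by blast
          then have "(ia, t) \<in> Bd" unfolding Bd_eq using bJ by auto
          then show ?thesis unfolding WX_Some using pf[of t] t r by auto
        qed
      qed
    qed
  qed
qed

end


lemma lin5: "(x::real) \<le> x' \<Longrightarrow> y \<le> y' \<Longrightarrow> z \<le> z' \<Longrightarrow> 1 + D + x' + y' + z' \<le> N \<Longrightarrow> 1 + D + x + y + z \<le> N"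
  by linarith

lemma abs3: "\<bar>a\<bar> \<le> M \<Longrightarrow> \<bar>b\<bar> \<le> B \<Longrightarrow> \<bar>a + c + b\<bar> \<le> M + \<bar>c::real\<bar> + B"
  by (rule order_trans[OF abs_triangle_ineq]) (use abs_triangle_ineq[of a c] in linarith)

lemma closed_roots:
  assumes K: "compact K"
  shows "closed {w. \<exists>a b. (a, b) \<in> K \<and> pT c d a b w = 0}"
proof -
  obtain M where M: "\<And>p. p \<in> K \<Longrightarrow> norm p \<le> M"
    using compact_imp_bounded[OF K] unfolding bounded_iff by blast
  define Rb where "Rb = 1 + \<bar>d\<bar> + \<bar>M\<bar> + \<bar>c\<bar> + \<bar>M\<bar> + \<bar>M\<bar> * \<bar>d\<bar> + \<bar>M\<bar> * \<bar>c\<bar>"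
  define Z where "Z = {p :: (real \<times> real) \<times> complex. fst p \<in> K \<and> pT c d (fst (fst p)) (snd (fst p)) (snd p) = 0}"
  have ab: "\<bar>a\<bar> \<le> \<bar>M\<bar>" "\<bar>b\<bar> \<le> \<bar>M\<bar>" if "(a, b) \<in> K" for a b
  proof -
    have "norm (a, b) \<le> M" using M that by blast
    moreover have "norm a \<le> norm (a, b)" "norm b \<le> norm (a, b)"
      using norm_fst_le[of a b] norm_snd_le[of b a] by auto
    ultimately show "\<bar>a\<bar> \<le> \<bar>M\<bar>" "\<bar>b\<bar> \<le> \<bar>M\<bar>" by auto
  qed
  have wb: "norm w < Rb" if "(a, b) \<in> K" "pT c d a b w = 0" for a b w
  proof (rule ccontr)
    assume "\<not> norm w < Rb"
    then have "norm w \<ge> 1 + \<bar>d\<bar> + \<bar>a + c + b\<bar> + \<bar>a * d\<bar> + \<bar>a * c\<bar>"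
    proof -
      have "\<bar>a + c + b\<bar> \<le> \<bar>M\<bar> + \<bar>c\<bar> + \<bar>M\<bar>" using ab[OF that(1)] by (rule abs3)
      moreover have "\<bar>a * d\<bar> \<le> \<bar>M\<bar> * \<bar>d\<bar>" unfolding abs_mult
        by (rule mult_right_mono) (use ab[OF that(1)] in auto)
      moreover have "\<bar>a * c\<bar> \<le> \<bar>M\<bar> * \<bar>c\<bar>" unfolding abs_mult
        by (rule mult_right_mono) (use ab[OF that(1)] in auto)
      moreover have "1 + \<bar>d\<bar> + (\<bar>M\<bar> + \<bar>c\<bar> + \<bar>M\<bar>) + \<bar>M\<bar> * \<bar>d\<bar> + \<bar>M\<bar> * \<bar>c\<bar> \<le> norm w"
        using \<open>\<not> norm w < Rb\<close> unfolding Rb_def by (simp add: add.assoc)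
      ultimately show ?thesis by (rule lin5)
    qed
    then show False using cauchy_bound that(2) by blast
  qed
  have "bounded Z"
  proof -
    have "Z \<subseteq> K \<times> cball 0 Rb"
    proof
      fix p assume "p \<in> Z"
      then have p: "fst p \<in> K" "pT c d (fst (fst p)) (snd (fst p)) (snd p) = 0" unfolding Z_def by auto
      have "(fst (fst p), snd (fst p)) \<in> K" using p(1) by simp
      then have "norm (snd p) < Rb" using wb p(2) by blast
      then show "p \<in> K \<times> cball 0 Rb" using p(1) by (simp add: mem_Times_iff)
    qed
    moreover have "bounded (K \<times> cball (0::complex) Rb)"
      by (rule bounded_Times[OF compact_imp_bounded[OF K] bounded_cball])
    ultimately show ?thesis by (rule bounded_subset[rotated])
  qed
  moreover have "closed Z"
  proof -
    have eq: "Z = (K \<times> UNIV) \<inter> {p. pT c d (fst (fst p)) (snd (fst p)) (snd p) = 0}"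
      unfolding Z_def by auto
    have cl: "closed {p :: (real \<times> real) \<times> complex. pT c d (fst (fst p)) (snd (fst p)) (snd p) = 0}"
      unfolding pT_def by (intro closed_Collect_eq continuous_intros)
    have "closed ((K \<times> (UNIV :: complex set)) \<inter> {p. pT c d (fst (fst p)) (snd (fst p)) (snd p) = 0})"
      by (intro closed_Int closed_Times compact_imp_closed K closed_UNIV cl)
    then show ?thesis unfolding eq .
  qed
  ultimately have "compact Z" by (simp add: compact_eq_bounded_closed)
  then have "compact (snd ` Z)" by (intro compact_continuous_image continuous_intros)
  moreover have "snd ` Z = {w. \<exists>a b. (a, b) \<in> K \<and> pT c d a b w = 0}"
  proof
    show "snd ` Z \<subseteq> {w. \<exists>a b. (a, b) \<in> K \<and> pT c d a b w = 0}"
      unfolding Z_def by fastforce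
    show "{w. \<exists>a b. (a, b) \<in> K \<and> pT c d a b w = 0} \<subseteq> snd ` Z"
    proof
      fix w assume "w \<in> {w. \<exists>a b. (a, b) \<in> K \<and> pT c d a b w = 0}"
      then obtain a b where "(a, b) \<in> K" "pT c d a b w = 0" by blast
      then have "((a, b), w) \<in> Z" unfolding Z_def by simp
      then show "w \<in> snd ` Z" by (metis image_eqI snd_conv)
    qed
  qed
  ultimately show ?thesis using compact_imp_closed[of "snd ` Z"] by simp
qed

lemma bound_roots:
  assumes "\<bar>a\<bar> \<le> M" "\<bar>b\<bar> \<le> B" "norm w \<ge> 1 + \<bar>d\<bar> + M + \<bar>c\<bar> + B + M * \<bar>d\<bar> + M * \<bar>c\<bar>"
  shows "pT c d a b w \<noteq> 0"
proof -
  have "\<bar>a + c + b\<bar> \<le> M + \<bar>c\<bar> + B" using assms(1,2) by (rule abs3)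
  moreover have "\<bar>a * d\<bar> \<le> M * \<bar>d\<bar>" unfolding abs_mult by (rule mult_right_mono) (use assms in auto)
  moreover have "\<bar>a * c\<bar> \<le> M * \<bar>c\<bar>" unfolding abs_mult by (rule mult_right_mono) (use assms in auto)
  moreover have "1 + \<bar>d\<bar> + (M + \<bar>c\<bar> + B) + M * \<bar>d\<bar> + M * \<bar>c\<bar> \<le> norm w"
    using assms(3) by (simp add: add.assoc)
  ultimately have "norm w \<ge> 1 + \<bar>d\<bar> + \<bar>a + c + b\<bar> + \<bar>a * d\<bar> + \<bar>a * c\<bar>" by (rule lin5)
  then show ?thesis by (rule cauchy_bound)
qed

lemma escape:
  assumes hol: "f holomorphic_on ball z r0" and r0: "r0 > 0"
    and nc: "\<not> f constant_on ball z r0" and fz: "f z = of_real t0"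
  shows "\<exists>w\<in>ball z r0. \<exists>t>t0. f w = of_real t" "\<exists>w\<in>ball z r0. \<exists>t<t0. f w = of_real t"
proof -
  have "open (f ` ball z r0)"
    by (rule open_mapping_thm[OF hol open_ball connected_ball open_ball order_refl nc])
  moreover have "of_real t0 \<in> f ` ball z r0" using fz r0 by (metis centre_in_ball imageI)
  ultimately obtain e where e: "e > 0" "ball (of_real t0) e \<subseteq> f ` ball z r0"
    using open_contains_ball_eq by metis
  have "of_real (t0 + e/2) \<in> ball (of_real t0 :: complex) e"
    using e(1) by (simp add: dist_norm flip: of_real_diff)
  then obtain w where "w \<in> ball z r0" "f w = of_real (t0 + e/2)" using e(2) by (metis imageE subsetD)
  then show "\<exists>w\<in>ball z r0. \<exists>t>t0. f w = of_real t" using e(1) by (intro bexI[of _ w] exI[of _ "t0 + e/2"]) auto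
  have "of_real (t0 - e/2) \<in> ball (of_real t0 :: complex) e"
    using e(1) by (simp add: dist_norm flip: of_real_diff)
  then obtain w where "w \<in> ball z r0" "f w = of_real (t0 - e/2)" using e(2) by (metis imageE subsetD)
  then show "\<exists>w\<in>ball z r0. \<exists>t<t0. f w = of_real t" using e(1) by (intro bexI[of _ w] exI[of _ "t0 - e/2"]) auto
qed

lemma nonconst_finite:
  fixes f :: "complex \<Rightarrow> complex"
  assumes r: "r > 0" and F: "\<And>k. finite {w. P k w}" and imp: "\<And>k w. w \<in> ball z r \<Longrightarrow> f w = k \<Longrightarrow> P k w"
  shows "\<not> f constant_on ball z r"
proof
  assume "f constant_on ball z r"
  then obtain k where k: "\<forall>w\<in>ball z r. f w = k" unfolding constant_on_def by blast
  then have "ball z r \<subseteq> {w. P k w}" using imp by blast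
  then have "finite (ball z r)" using F finite_subset by blast
  then show False using finite_imp_not_open[of "ball z r"] r by auto
qed


lemma isCont_qf: "isCont (qf c d) z"
  unfolding qf_def by (intro continuous_intros)

context wsetup
begin

abbreviation "S \<equiv> WX c d Om"

lemma inf_Om: "(\<alpha>, b) \<in> Om \<Longrightarrow> \<alpha> = \<infinity> \<or> \<alpha> = -\<infinity> \<Longrightarrow> ia = -\<infinity> \<or> ib = \<infinity>"
  by (auto simp: ereal_infty_less_eq)

lemma roots_sub:
  assumes "\<And>a b. (a, b) \<in> K \<Longrightarrow> (ereal a, b) \<in> Om"
  shows "{w. \<exists>a b. (a, b) \<in> K \<and> pT c d a b w = 0} \<subseteq> {w. Some w \<in> S}"
  using assms unfolding WX_Some by blast

lemma fr_None:
  assumes fr: "None \<in> riemann_sphere frontier_of S"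
  shows "None \<in> WX c d Bd"
proof -
  have cl: "None \<in> riemann_sphere closure_of S" using fr unfolding frontier_of_def by blast
  show ?thesis
  proof (cases "ia = -\<infinity> \<or> ib = \<infinity>")
    case True
    have "(ia, b1) \<in> Bd" "(ib, b1) \<in> Bd" unfolding Bd_eq using iab b12 by auto
    then show ?thesis unfolding WX_None using True by blast
  next
    case False
    then obtain r1 r2 where r: "ia = ereal r1" "ib = ereal r2" using ia_fin ib_fin
      by (cases ia; cases ib) auto
    have nS: "None \<notin> S" unfolding WX_None using inf_Om False by blast
    define M where "M = \<bar>r1\<bar> + \<bar>r2\<bar>"
    define B where "B = \<bar>b1\<bar> + \<bar>b2\<bar>"
    define K where "K = 1 + \<bar>d\<bar> + M + \<bar>c\<bar> + B + M * \<bar>d\<bar> + M * \<bar>c\<bar>"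
    obtain w where w: "K < norm w" "Some w \<in> S" using rs_closure_None[OF cl nS] by blast
    from w(2)[unfolded WX_Some] obtain a b where ab: "(ereal a, b) \<in> Om" "pT c d a b w = 0"
      using inf_Om False by blast
    have "\<bar>a\<bar> \<le> M" using ab(1) r unfolding M_def by auto
    moreover have "\<bar>b\<bar> \<le> B" using ab(1) unfolding B_def by auto
    ultimately have "pT c d a b w \<noteq> 0" using w(1) unfolding K_def by (intro bound_roots) auto
    then show ?thesis using ab(2) by simp
  qed
qed

lemma closure_pt:
  assumes cl: "Some z \<in> riemann_sphere closure_of S"
  shows "Some z \<in> S"
proof -
  let ?Sf = "{w. Some w \<in> S}"
  have zc: "z \<in> closure ?Sf" using rs_closure_Some[OF cl] .
  show ?thesis
  proof (cases "qf c d z = 0")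
    case q0: True
    show ?thesis
    proof (cases "ia = -\<infinity> \<or> ib = \<infinity>")
      case True
      have "(ia, b1) \<in> Om" "(ib, b1) \<in> Om" using iab b12 by auto
      moreover have "z = delta_plus c d \<or> z = delta_minus c d" using q0 qf_zero_iff by blast
      ultimately show ?thesis unfolding WX_Some using True by blast
    next
      case False
      then obtain r1 r2 where r: "ia = ereal r1" "ib = ereal r2" using ia_fin ib_fin
        by (cases ia; cases ib) auto
      let ?K = "{r1..r2} \<times> {b1..b2}"
      have "?Sf \<subseteq> {w. \<exists>a b. (a, b) \<in> ?K \<and> pT c d a b w = 0}"
      proof
        fix w assume "w \<in> ?Sf"
        then obtain a b where ab: "(ereal a, b) \<in> Om" "pT c d a b w = 0"
          unfolding mem_Collect_eq WX_Some using inf_Om False by blast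
        then show "w \<in> {w. \<exists>a b. (a, b) \<in> ?K \<and> pT c d a b w = 0}" using r by auto
      qed
      moreover have "closed {w. \<exists>a b. (a, b) \<in> ?K \<and> pT c d a b w = 0}"
        by (intro closed_roots compact_Times compact_Icc)
      ultimately have "closure ?Sf \<subseteq> {w. \<exists>a b. (a, b) \<in> ?K \<and> pT c d a b w = 0}"
        by (rule closure_minimal)
      also have "\<dots> \<subseteq> ?Sf" by (rule roots_sub) (use r in auto)
      finally show ?thesis using zc by blast
    qed
  next
    case q0: False
    define m where "m = norm (qf c d z) / 2"
    have m0: "m > 0" using q0 unfolding m_def by simp
    obtain \<delta> where \<delta>: "\<delta> > 0" "\<And>w. dist w z < \<delta> \<Longrightarrow> dist (qf c d w) (qf c d z) < m"
      using isCont_qf[where c=c and d=d and z=z] m0 unfolding continuous_at_eps_delta by blast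
    define r where "r = min \<delta> 1"
    have r0: "r > 0" using \<delta> unfolding r_def by simp
    have qm: "norm (qf c d w) > m" if "dist w z < r" for w
    proof -
      have "dist (qf c d w) (qf c d z) < m" using \<delta>(2) that unfolding r_def by simp
      then have "norm (qf c d z) - norm (qf c d w) < m"
        using norm_triangle_ineq2[of "qf c d z" "qf c d w"] by (simp add: dist_norm norm_minus_commute)
      then show ?thesis unfolding m_def by simp
    qed
    define R0 where "R0 = norm z + 1"
    define B where "B = \<bar>b1\<bar> + \<bar>b2\<bar>"
    define M where "M = R0\<^sup>2 + B * R0\<^sup>2 / m"
    define lo where "lo = (case ia of ereal x \<Rightarrow> x | _ \<Rightarrow> - M)"
    define hi where "hi = (case ib of ereal x \<Rightarrow> x | _ \<Rightarrow> M)"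
    let ?K = "{lo..hi} \<times> {b1..b2}"
    have Kin: "(ereal a, b) \<in> Om" if "(a, b) \<in> ?K" for a b
    proof -
      have "ia \<le> ereal a" using that ia_fin unfolding lo_def by (cases ia) auto
      moreover have "ereal a \<le> ib" using that ib_fin unfolding hi_def by (cases ib) auto
      ultimately show ?thesis using that by auto
    qed
    have sub: "?Sf \<inter> ball z r \<subseteq> {w. \<exists>a b. (a, b) \<in> ?K \<and> pT c d a b w = 0}"
    proof
      fix w assume w: "w \<in> ?Sf \<inter> ball z r"
      then have dw: "dist w z < r" by (simp add: dist_commute)
      have qw: "norm (qf c d w) > m" by (rule qm[OF dw])
      then have "qf c d w \<noteq> 0" using m0 by auto
      then have nd: "\<not> (w = delta_plus c d \<or> w = delta_minus c d)" using qf_zero_iff by blast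
      obtain a b where ab: "(ereal a, b) \<in> Om" "pT c d a b w = 0"
        using w nd unfolding WX_Some by blast
      have nw: "norm w \<le> R0"
        using dw norm_triangle_ineq2[of w z] unfolding R0_def r_def by (simp add: dist_norm)
      have bB: "\<bar>b\<bar> \<le> B" using ab(1) unfolding B_def by auto
      have e: "(of_real a - w\<^sup>2) * qf c d w = of_real b * w\<^sup>2" using ab(2) unfolding pT_q by simp
      then have "norm (of_real a - w\<^sup>2) * norm (qf c d w) = \<bar>b\<bar> * (norm w)\<^sup>2"
        by (metis norm_mult norm_of_real norm_power)
      also have "\<dots> \<le> B * R0\<^sup>2"
        by (intro mult_mono power_mono bB nw) (auto simp: B_def)
      finally have "norm (of_real a - w\<^sup>2) * norm (qf c d w) \<le> B * R0\<^sup>2" .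
      then have "norm (of_real a - w\<^sup>2) * m \<le> B * R0\<^sup>2"
        using qw by (meson less_imp_le mult_left_mono norm_ge_zero order_trans)
      then have n1: "norm (of_real a - w\<^sup>2) \<le> B * R0\<^sup>2 / m" using m0 by (simp add: field_simps)
      have "\<bar>a\<bar> = norm (w\<^sup>2 + (of_real a - w\<^sup>2))" by simp
      also have "\<dots> \<le> norm (w\<^sup>2) + norm (of_real a - w\<^sup>2)" by (rule norm_triangle_ineq)
      also have "norm (w\<^sup>2) \<le> R0\<^sup>2" unfolding norm_power by (intro power_mono nw) simp
      finally have aM: "\<bar>a\<bar> \<le> M" using n1 unfolding M_def by linarith
      have "lo \<le> a" using ab(1) aM ia_fin unfolding lo_def by (cases ia) auto
      moreover have "a \<le> hi" using ab(1) aM ib_fin unfolding hi_def by (cases ib) auto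
      ultimately show "w \<in> {w. \<exists>a b. (a, b) \<in> ?K \<and> pT c d a b w = 0}" using ab by auto
    qed
    have "z \<in> ball z r \<inter> closure ?Sf" using zc r0 by simp
    also have "\<dots> \<subseteq> closure (ball z r \<inter> ?Sf)" by (rule open_Int_closure_subset) simp
    also have "\<dots> \<subseteq> closure {w. \<exists>a b. (a, b) \<in> ?K \<and> pT c d a b w = 0}"
      by (rule closure_mono) (use sub in blast)
    also have "\<dots> = {w. \<exists>a b. (a, b) \<in> ?K \<and> pT c d a b w = 0}"
      by (intro closure_closed closed_roots compact_Times compact_Icc)
    also have "\<dots> \<subseteq> ?Sf" by (rule roots_sub) (rule Kin)
    finally show ?thesis by simp
  qed
qed

lemma fr_Some:
  assumes fr: "Some z \<in> riemann_sphere frontier_of S" and re: "Re z \<noteq> 0"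
  shows "Some z \<in> WX c d Bd"
proof -
  have cl: "Some z \<in> riemann_sphere closure_of S" and ni: "Some z \<notin> riemann_sphere interior_of S"
    using fr unfolding frontier_of_def by auto
  have zS: "Some z \<in> S" by (rule closure_pt[OF cl])
  have d0': "d \<noteq> 0" using d0 by simp
  have z0: "z \<noteq> 0" using re by auto
  show ?thesis
  proof (cases "qf c d z = 0")
    case q0: True
    from zS[unfolded WX_Some] show ?thesis
    proof
      assume "\<exists>a b. (ereal a, b) \<in> Om \<and> pT c d a b z = 0"
      then obtain a b where ab: "(ereal a, b) \<in> Om" "pT c d a b z = 0" by blast
      have "of_real b * z\<^sup>2 = 0" using ab(2) q0 unfolding pT_q by simp
      then have b0: "b = 0" using z0 by simp
      have bd: "(ia, 0) \<in> Bd" using ab(1) b0 iab unfolding Bd_eq by auto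
      show ?thesis
      proof (cases ia)
        case (real x)
        then have "pT c d x 0 z = 0" unfolding pT_q using q0 by simp
        then show ?thesis unfolding WX_Some using bd real by blast
      next
        case MInf
        then show ?thesis using bd q0 qf_zero_iff unfolding WX_Some by blast
      next
        case PInf
        then show ?thesis using ia_fin by simp
      qed
    next
      assume "(z = delta_plus c d \<or> z = delta_minus c d) \<and> (\<exists>\<alpha> b. (\<alpha>, b) \<in> Om \<and> (\<alpha> = \<infinity> \<or> \<alpha> = -\<infinity>))"
      then show ?thesis unfolding WX_Some using inf_in_Bd by blast
    qed
  next
    case q0: False
    have nd: "\<not> (z = delta_plus c d \<or> z = delta_minus c d)" using q0 qf_zero_iff by blast
    obtain a b where ab: "(ereal a, b) \<in> Om" "pT c d a b z = 0" using zS nd unfolding WX_Some by blast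
    show ?thesis
    proof (cases "(ereal a, b) \<in> Bd")
      case True
      then show ?thesis unfolding WX_Some using ab by blast
    next
      case False
      then have strict: "ia < ereal a" "ereal a < ib" "b1 < b" "b < b2"
        using ab(1) unfolding Bd_eq by (auto simp: order.order_iff_strict)
      have D: "Dc c d z \<noteq> 0" by (rule Dc_nonzero[OF d0' re q0 ab(2)])
      have ab': "al c d z = a" "be c d z = b"
        using root_unique[OF d0' re q0 cramer_root[OF D] ab(2)] by auto
      obtain l1 where l1: "ia < ereal l1" "ereal l1 < ereal a" using ereal_dense2[OF strict(1)] by blast
      obtain l2 where l2: "ereal a < ereal l2" "ereal l2 < ib" using ereal_dense2[OF strict(2)] by blast
      have l12: "l1 < a" "a < l2" using l1 l2 by auto
      obtain \<delta>1 where \<delta>1: "\<delta>1 > 0" "\<And>w. dist w z < \<delta>1 \<Longrightarrow> dist (Dc c d w) (Dc c d z) < \<bar>Dc c d z\<bar>"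
      proof -
        have "\<bar>Dc c d z\<bar> > 0" using D by simp
        moreover have "\<forall>e>0. \<exists>\<delta>>0. \<forall>w. dist w z < \<delta> \<longrightarrow> dist (Dc c d w) (Dc c d z) < e"
          using isCont_Dc[where c=c and d=d and w=z] unfolding continuous_at_eps_delta .
        ultimately show ?thesis using that by blast
      qed
      obtain \<delta>2 where \<delta>2: "\<delta>2 > 0" "\<And>w. dist w z < \<delta>2 \<Longrightarrow> dist (al c d w) (al c d z) < min (a - l1) (l2 - a)"
      proof -
        have "min (a - l1) (l2 - a) > 0" using l12 by simp
        moreover have "\<forall>e>0. \<exists>\<delta>>0. \<forall>w. dist w z < \<delta> \<longrightarrow> dist (al c d w) (al c d z) < e"
          using isCont_al[OF D] unfolding continuous_at_eps_delta .
        ultimately show ?thesis using that by blast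
      qed
      obtain \<delta>3 where \<delta>3: "\<delta>3 > 0" "\<And>w. dist w z < \<delta>3 \<Longrightarrow> dist (be c d w) (be c d z) < min (b - b1) (b2 - b)"
      proof -
        have "min (b - b1) (b2 - b) > 0" using strict(3,4) by simp
        moreover have "\<forall>e>0. \<exists>\<delta>>0. \<forall>w. dist w z < \<delta> \<longrightarrow> dist (be c d w) (be c d z) < e"
          using isCont_be[OF D] unfolding continuous_at_eps_delta .
        ultimately show ?thesis using that by blast
      qed
      define r where "r = min \<delta>1 (min \<delta>2 \<delta>3)"
      have "Some z \<in> riemann_sphere interior_of S"
      proof (rule rs_interior_SomeI[of r])
        show "0 < r" using \<delta>1 \<delta>2 \<delta>3 unfolding r_def by simp
        fix w assume "w \<in> ball z r"
        then have dw: "dist w z < \<delta>1" "dist w z < \<delta>2" "dist w z < \<delta>3"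
          unfolding r_def by (auto simp: dist_commute)
        have "Dc c d w \<noteq> 0"
        proof
          assume "Dc c d w = 0"
          then show False using \<delta>1(2)[OF dw(1)] by (simp add: dist_real_def)
        qed
        then have rt: "pT c d (al c d w) (be c d w) w = 0" by (rule cramer_root)
        have "\<bar>al c d w - a\<bar> < min (a - l1) (l2 - a)" using \<delta>2(2)[OF dw(2)] ab' by (simp add: dist_real_def)
        then have "l1 < al c d w" "al c d w < l2" by auto
        then have e1: "ereal l1 < ereal (al c d w)" "ereal (al c d w) < ereal l2" by simp_all
        have "ia < ereal (al c d w)" by (rule less_trans[OF l1(1) e1(1)])
        moreover have "ereal (al c d w) < ib" by (rule less_trans[OF e1(2) l2(2)])
        moreover have "\<bar>be c d w - b\<bar> < min (b - b1) (b2 - b)" using \<delta>3(2)[OF dw(3)] ab' by (simp add: dist_real_def)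
        then have "b1 < be c d w" "be c d w < b2" by auto
        ultimately have "(ereal (al c d w), be c d w) \<in> Om" by auto
        then show "Some w \<in> S" unfolding WX_Some using rt by blast
      qed
      then show ?thesis using ni by blast
    qed
  qed
qed

end


lemma qf_zero_im:
  assumes "qf c d w = 0" "Re w \<noteq> 0"
  shows "Im w = - d / 2" "(Re w)\<^sup>2 = c - d\<^sup>2 / 4"
proof -
  have re: "c + d * Im w - (Re w)\<^sup>2 + (Im w)\<^sup>2 = 0" and im: "- d * Re w - 2 * Re w * Im w = 0"
    using assms(1) unfolding qf_def complex_eq_iff by (simp_all add: power2_eq_square algebra_simps)
  have "Re w * (d + 2 * Im w) = 0" using im by (simp add: algebra_simps)
  then show iw: "Im w = - d / 2" using assms(2) by simp
  show "(Re w)\<^sup>2 = c - d\<^sup>2 / 4" using re unfolding iw by (simp add: power2_eq_square field_simps)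
qed

lemma pT_diag:
  "Re (pT c d a b (Complex t t)) = -4 * t^4 - 2 * d * t^3 + a * d * t + a * c"
  "Im (pT c d a b (Complex t t)) = -2 * d * t^3 - 2 * (a + c + b) * t\<^sup>2 - a * d * t"
  unfolding pT_def by (simp_all add: power2_eq_square power3_eq_cube power4_eq_xxxx algebra_simps)

lemma F_escape:
  assumes qb: "\<And>w. w \<in> ball z r0 \<Longrightarrow> qf c d w \<noteq> 0" and r0: "r0 > 0" and p: "pT c d a0 b0 z = 0"
  shows "\<exists>w\<in>ball z r0. \<exists>t>a0. pT c d t b0 w = 0" "\<exists>w\<in>ball z r0. \<exists>t<a0. pT c d t b0 w = 0"
proof -
  define F where "F w = w\<^sup>2 + of_real b0 * w\<^sup>2 / qf c d w" for w
  have hol: "F holomorphic_on ball z r0"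
    unfolding F_def using qb unfolding qf_def by (intro holomorphic_intros) auto
  have qz: "qf c d z \<noteq> 0" using qb r0 by simp
  have "(of_real a0 - z\<^sup>2) * qf c d z = of_real b0 * z\<^sup>2" using p unfolding pT_q by simp
  then have Fz: "F z = of_real a0" unfolding F_def using qz by (simp add: field_simps)
  have nc: "\<not> F constant_on ball z r0"
  proof (rule nonconst_finite[where P="\<lambda>k w. (k - w\<^sup>2) * qf c d w - of_real b0 * w\<^sup>2 = 0"])
    show "r0 > 0" by fact
    show "finite {w. (k - w\<^sup>2) * qf c d w - of_real b0 * w\<^sup>2 = 0}" for k by (rule finite_roots_gen)
    show "(k - w\<^sup>2) * qf c d w - of_real b0 * w\<^sup>2 = 0" if "w \<in> ball z r0" "F w = k" for k w
      using that qb[OF that(1)] unfolding F_def by (auto simp: field_simps)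
  qed
  have key: "pT c d t b0 w = 0" if "w \<in> ball z r0" "F w = of_real t" for w t
  proof -
    have "of_real t = w\<^sup>2 + of_real b0 * w\<^sup>2 / qf c d w" using that(2) unfolding F_def by simp
    then show ?thesis unfolding pT_q using qb[OF that(1)] by (simp add: field_simps)
  qed
  show "\<exists>w\<in>ball z r0. \<exists>t>a0. pT c d t b0 w = 0" using escape(1)[OF hol r0 nc Fz] key by blast
  show "\<exists>w\<in>ball z r0. \<exists>t<a0. pT c d t b0 w = 0" using escape(2)[OF hol r0 nc Fz] key by blast
qed

lemma G_escape:
  assumes qb: "\<And>w. w \<in> ball z r0 \<Longrightarrow> qf c d w \<noteq> 0 \<and> w \<noteq> 0" and r0: "r0 > 0" and p: "pT c d a0 b0 z = 0"
  shows "\<exists>w\<in>ball z r0. \<exists>t>b0. pT c d a0 t w = 0" "\<exists>w\<in>ball z r0. \<exists>t<b0. pT c d a0 t w = 0"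
proof -
  define G where "G w = (of_real a0 - w\<^sup>2) * qf c d w / w\<^sup>2" for w
  have hol: "G holomorphic_on ball z r0"
    unfolding G_def using qb unfolding qf_def by (intro holomorphic_intros) auto
  have z0: "z \<noteq> 0" using qb r0 by simp
  have "(of_real a0 - z\<^sup>2) * qf c d z = of_real b0 * z\<^sup>2" using p unfolding pT_q by simp
  then have Gz: "G z = of_real b0" unfolding G_def using z0 by (simp add: field_simps)
  have nc: "\<not> G constant_on ball z r0"
  proof (rule nonconst_finite[where P="\<lambda>k w. (of_real a0 - w\<^sup>2) * qf c d w - k * w\<^sup>2 = 0"])
    show "r0 > 0" by fact
    show "finite {w. (of_real a0 - w\<^sup>2) * qf c d w - k * w\<^sup>2 = 0}" for k by (rule finite_roots_gen)
    show "(of_real a0 - w\<^sup>2) * qf c d w - k * w\<^sup>2 = 0" if "w \<in> ball z r0" "G w = k" for k w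
      using that qb[OF that(1)] unfolding G_def by (auto simp: field_simps)
  qed
  have key: "pT c d a0 t w = 0" if "w \<in> ball z r0" "G w = of_real t" for w t
  proof -
    have "of_real t = (of_real a0 - w\<^sup>2) * qf c d w / w\<^sup>2" using that(2) unfolding G_def by simp
    then show ?thesis unfolding pT_q using qb[OF that(1)] by (simp add: field_simps)
  qed
  show "\<exists>w\<in>ball z r0. \<exists>t>b0. pT c d a0 t w = 0" using escape(1)[OF hol r0 nc Gz] key by blast
  show "\<exists>w\<in>ball z r0. \<exists>t<b0. pT c d a0 t w = 0" using escape(2)[OF hol r0 nc Gz] key by blast
qed

context wsetup
begin

lemma notS:
  assumes re: "Re w \<noteq> 0" and q: "qf c d w \<noteq> 0" and p: "pT c d t b' w = 0" and nO: "(ereal t, b') \<notin> Om"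
  shows "Some w \<notin> S"
proof
  assume "Some w \<in> S"
  moreover have "\<not> (w = delta_plus c d \<or> w = delta_minus c d)" using q qf_zero_iff by blast
  ultimately obtain a b where ab: "(ereal a, b) \<in> Om" "pT c d a b w = 0" unfolding WX_Some by blast
  have "a = t \<and> b = b'" using root_unique[OF _ re q ab(2) p] d0 by simp
  then show False using ab(1) nO by simp
qed

lemma notS_circle:
  assumes re: "Re w \<noteq> 0" and q: "qf c d w \<noteq> 0" and D: "Dc c d w = 0"
  shows "Some w \<notin> S"
proof
  assume "Some w \<in> S"
  moreover have "\<not> (w = delta_plus c d \<or> w = delta_minus c d)" using q qf_zero_iff by blast
  ultimately obtain a b where ab: "(ereal a, b) \<in> Om" "pT c d a b w = 0" unfolding WX_Some by blast
  show False using Dc_nonzero[OF _ re q ab(2)] D d0 by simp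
qed

lemma bd_None:
  assumes "None \<in> WX c d Bd"
  shows "None \<in> riemann_sphere frontier_of S"
proof -
  have nS: "None \<in> S" using assms WX_mono[OF Bd_sub] by blast
  then have "None \<in> riemann_sphere closure_of S" using closure_of_subset[of S riemann_sphere]
    by (auto simp: rs_topspace)
  moreover have "None \<notin> riemann_sphere interior_of S"
  proof
    assume "None \<in> riemann_sphere interior_of S"
    then obtain R where R: "\<And>w. R < norm w \<Longrightarrow> Some w \<in> S" using rs_interior_None by blast
    define t where "t = 1 + \<bar>R\<bar> + norm (delta_plus c d) + norm (delta_minus c d) + (\<bar>b1\<bar> + c) / d"
    define w where "w = Complex t t"
    have q0: "(\<bar>b1\<bar> + c) / d \<ge> 0" using c0 d0 by (intro divide_nonneg_pos) auto
    note nn = q0 abs_ge_zero[of R] norm_ge_zero[of "delta_plus c d"] norm_ge_zero[of "delta_minus c d"]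
    have t0: "t > 0" "t \<ge> 1" unfolding t_def using nn by linarith+
    have nw: "t \<le> norm w" using abs_Re_le_cmod[of w] t0 unfolding w_def by simp
    have "R < norm w" using nw nn unfolding t_def by linarith
    then have wS: "Some w \<in> S" by (rule R)
    have "norm (delta_plus c d) < norm w" "norm (delta_minus c d) < norm w"
      using nw nn unfolding t_def by linarith+
    then have nd: "\<not> (w = delta_plus c d \<or> w = delta_minus c d)" by auto
    obtain a b where ab: "(ereal a, b) \<in> Om" "pT c d a b w = 0" using wS nd unfolding WX_Some by blast
    have re: "-4 * t^4 - 2 * d * t^3 + a * d * t + a * c = 0" and im: "-2 * d * t^3 - 2 * (a + c + b) * t\<^sup>2 - a * d * t = 0"
      using ab(2) pT_diag[of c d a b t] unfolding w_def by simp_all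
    have "a > 0"
    proof (rule ccontr)
      assume "\<not> a > 0"
      then have "a * (d * t + c) \<le> 0" using d0 c0 t0 by (intro mult_nonpos_nonneg) auto
      moreover have "4 * t^4 + 2 * d * t^3 > 0" using d0 t0 by (intro add_pos_pos) auto
      ultimately show False using re by (simp add: algebra_simps)
    qed
    have "d * t \<ge> \<bar>b1\<bar> + c + d"
    proof -
      have "t \<ge> (\<bar>b1\<bar> + c) / d + 1" unfolding t_def using nn by linarith
      then have "d * t \<ge> d * ((\<bar>b1\<bar> + c) / d + 1)" using d0 by (intro mult_left_mono) auto
      moreover have "d * ((\<bar>b1\<bar> + c) / d + 1) = \<bar>b1\<bar> + c + d" using d0 by (simp add: field_simps)
      ultimately show ?thesis by linarith
    qed
    moreover have "b \<ge> b1" using ab(1) by auto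
    ultimately have bp: "b + c + d * t > 0" using d0 c0 abs_ge_minus_self[of b1] by linarith
    have "2 * a * t\<^sup>2 + 2 * (b + c + d * t) * t\<^sup>2 + a * d * t > 0"
    proof -
      have "a * t\<^sup>2 > 0" using \<open>a > 0\<close> t0 by simp
      moreover have "(b + c + d * t) * t\<^sup>2 > 0" using bp t0 by simp
      moreover have "a * d * t > 0" using \<open>a > 0\<close> t0 d0 by simp
      ultimately show ?thesis by linarith
    qed
    then show False using im by (simp add: algebra_simps power2_eq_square power3_eq_cube)
  qed
  ultimately show ?thesis unfolding frontier_of_def by blast
qed

lemma bd_Some:
  assumes zB: "Some z \<in> WX c d Bd" and re: "Re z \<noteq> 0"
  shows "Some z \<in> riemann_sphere frontier_of S"
proof -
  have zS: "Some z \<in> S" using zB WX_mono[OF Bd_sub] by blast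
  then have cl: "Some z \<in> riemann_sphere closure_of S" using closure_of_subset[of S riemann_sphere]
    by (auto simp: rs_topspace)
  moreover have "Some z \<notin> riemann_sphere interior_of S"
  proof
    assume "Some z \<in> riemann_sphere interior_of S"
    then obtain r where r: "r > 0" "\<And>w. w \<in> ball z r \<Longrightarrow> Some w \<in> S"
      using rs_interior_Some by blast
    show False
    proof (cases "qf c d z = 0")
      case q0: True
      have iz: "Im z = - d / 2" and rz: "(Re z)\<^sup>2 = c - d\<^sup>2 / 4" using qf_zero_im[OF q0 re] by auto
      define \<rho> where "\<rho> s = (c / d)\<^sup>2 - (s - d / 2 + c / d)\<^sup>2" for s
      have \<rho>0: "\<rho> 0 = (Re z)\<^sup>2" unfolding \<rho>_def rz using d0 by (simp add: field_simps power2_eq_square)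
      have \<rho>pos: "\<rho> 0 > 0" unfolding \<rho>0 using re by simp
      define wf where "wf s = complex_of_real (sgn (Re z) * sqrt (\<rho> s)) + \<i> * complex_of_real (s - d / 2)" for s
      have rew: "Re (wf s) = sgn (Re z) * sqrt (\<rho> s)" "Im (wf s) = s - d / 2" for s
        unfolding wf_def by simp_all
      have wf0: "wf 0 = z"
      proof -
        have "sgn (Re z) * sqrt (\<rho> 0) = Re z" unfolding \<rho>0 real_sqrt_abs by (simp add: sgn_mult_abs)
        then show ?thesis unfolding complex_eq_iff rew using iz by simp
      qed
      have cwf: "isCont wf 0" unfolding wf_def \<rho>_def by (intro continuous_intros)
      have c\<rho>: "isCont \<rho> 0" unfolding \<rho>_def by (intro continuous_intros)
      obtain e1 where e1: "e1 > 0" "\<And>s. dist s 0 < e1 \<Longrightarrow> dist (wf s) (wf 0) < r"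
      proof -
        have "\<forall>e>0. \<exists>\<delta>>0. \<forall>s. dist s 0 < \<delta> \<longrightarrow> dist (wf s) (wf 0) < e"
          using cwf unfolding continuous_at_eps_delta .
        then show ?thesis using that r(1) by blast
      qed
      obtain e2 where e2: "e2 > 0" "\<And>s. dist s 0 < e2 \<Longrightarrow> dist (\<rho> s) (\<rho> 0) < \<rho> 0"
      proof -
        have "\<forall>e>0. \<exists>\<delta>>0. \<forall>s. dist s 0 < \<delta> \<longrightarrow> dist (\<rho> s) (\<rho> 0) < e"
          using c\<rho> unfolding continuous_at_eps_delta .
        then show ?thesis using that \<rho>pos by blast
      qed
      define s where "s = min e1 e2 / 2"
      have s0: "s > 0" "dist s 0 < e1" "dist s 0 < e2" using e1(1) e2(1) unfolding s_def by auto
      have "dist (wf s) z < r" using e1(2)[OF s0(2)] wf0 by simp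
      then have inS: "Some (wf s) \<in> S" using r(2) by (simp add: dist_commute)
      have \<rho>s: "\<rho> s > 0" using e2(2)[OF s0(3)] by (simp add: dist_real_def)
      have sg: "sgn (Re z) * sgn (Re z) = 1" using re by (cases "Re z > 0") (auto simp: sgn_if)
      have rw: "Re (wf s) \<noteq> 0" unfolding rew using re \<rho>s by (simp add: sgn_if)
      have qw: "qf c d (wf s) \<noteq> 0"
      proof
        assume "qf c d (wf s) = 0"
        then have "Im (wf s) = - d / 2" using qf_zero_im(1) rw by blast
        then show False unfolding rew using s0(1) by simp
      qed
      have re2: "(Re (wf s))\<^sup>2 = \<rho> s"
      proof -
        have "(Re (wf s))\<^sup>2 = (sgn (Re z) * sgn (Re z)) * (sqrt (\<rho> s))\<^sup>2"
          unfolding rew by (simp add: power2_eq_square algebra_simps)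
        then show ?thesis using sg \<rho>s by simp
      qed
      have "Dc c d (wf s) = 0"
      proof -
        have "2 * c * Im (wf s) + d * ((Re (wf s))\<^sup>2 + (Im (wf s))\<^sup>2) = 0"
          unfolding re2 unfolding rew \<rho>_def using d0 by (simp add: field_simps power2_eq_square)
        then show ?thesis unfolding Dc_formula by simp
      qed
      then show False using notS_circle[OF rw qw] inS by blast
    next
      case q0: False
      have nd: "\<not> (z = delta_plus c d \<or> z = delta_minus c d)" using q0 qf_zero_iff by blast
      obtain a0 b0 where ab: "(ereal a0, b0) \<in> Bd" "pT c d a0 b0 z = 0" using zB nd unfolding WX_Some by blast
      obtain \<delta> where \<delta>: "\<delta> > 0" "\<And>w. dist w z < \<delta> \<Longrightarrow> dist (qf c d w) (qf c d z) < norm (qf c d z)"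
      proof -
        have "\<forall>e>0. \<exists>\<delta>>0. \<forall>w. dist w z < \<delta> \<longrightarrow> dist (qf c d w) (qf c d z) < e"
          using isCont_qf[where c=c and d=d and z=z] unfolding continuous_at_eps_delta .
        moreover have "norm (qf c d z) > 0" using q0 by simp
        ultimately show ?thesis using that by blast
      qed
      define r0 where "r0 = min r (min \<delta> \<bar>Re z\<bar>)"
      have r0: "r0 > 0" "r0 \<le> r" using r(1) \<delta>(1) re unfolding r0_def by auto
      have qb: "qf c d w \<noteq> 0 \<and> w \<noteq> 0" and rb: "Re w \<noteq> 0" if "w \<in> ball z r0" for w
      proof -
        have dw: "dist w z < \<delta>" "dist w z < \<bar>Re z\<bar>" using that unfolding r0_def by (auto simp: dist_commute)
        have "qf c d w \<noteq> 0"
        proof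
          assume "qf c d w = 0"
          then show False using \<delta>(2)[OF dw(1)] by simp
        qed
        moreover have "\<bar>Re w - Re z\<bar> < \<bar>Re z\<bar>"
          using dw(2) abs_Re_le_cmod[of "w - z"] by (simp add: dist_norm)
        then show "Re w \<noteq> 0" by auto
        ultimately show "qf c d w \<noteq> 0 \<and> w \<noteq> 0" by auto
      qed
      have esc: "\<exists>w\<in>ball z r0. \<exists>t b'. pT c d t b' w = 0 \<and> (ereal t, b') \<notin> Om"
      proof -
        have "ereal a0 = ib \<or> ereal a0 = ia \<or> b0 = b2 \<or> b0 = b1" using ab(1) unfolding Bd_eq by auto
        then show ?thesis
        proof (elim disjE)
          assume h: "ereal a0 = ib"
          obtain w t where "w \<in> ball z r0" "t > a0" "pT c d t b0 w = 0"
            using F_escape(1)[of z r0 c d a0 b0] qb r0(1) ab(2) by blast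
          then show ?thesis using h by (intro bexI[of _ w] exI[of _ t] exI[of _ b0]) auto
        next
          assume h: "ereal a0 = ia"
          obtain w t where "w \<in> ball z r0" "t < a0" "pT c d t b0 w = 0"
            using F_escape(2)[of z r0 c d a0 b0] qb r0(1) ab(2) by blast
          then show ?thesis using h by (intro bexI[of _ w] exI[of _ t] exI[of _ b0]) auto
        next
          assume h: "b0 = b2"
          obtain w t where "w \<in> ball z r0" "t > b0" "pT c d a0 t w = 0"
            using G_escape(1)[of z r0 c d a0 b0] qb r0(1) ab(2) by blast
          then show ?thesis using h by (intro bexI[of _ w] exI[of _ a0] exI[of _ t]) auto
        next
          assume h: "b0 = b1"
          obtain w t where "w \<in> ball z r0" "t < b0" "pT c d a0 t w = 0"
            using G_escape(2)[of z r0 c d a0 b0] qb r0(1) ab(2) by blast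
          then show ?thesis using h by (intro bexI[of _ w] exI[of _ a0] exI[of _ t]) auto
        qed
      qed
      then obtain w t b' where w: "w \<in> ball z r0" "pT c d t b' w = 0" "(ereal t, b') \<notin> Om" by blast
      have "Some w \<notin> S" using notS[OF rb[OF w(1)] conjunct1[OF qb[OF w(1)]] w(2,3)] .
      moreover have "Some w \<in> S" using r(2) w(1) r0(2) by auto
      ultimately show False by blast
    qed
  qed
  ultimately show ?thesis unfolding frontier_of_def by blast
qed

end


lemma imag_Some: "Some z \<in> imag_axis \<longleftrightarrow> Re z = 0"
  unfolding imag_axis_def by auto

lemma imag_None: "None \<notin> imag_axis"
  unfolding imag_axis_def by auto

context wsetup
begin

theorem main:
  "(WX c d Om \<inter> imag_axis = WX c d Bd \<inter> imag_axis)
    \<and> ((riemann_sphere frontier_of (WX c d Om)) - imag_axis = WX c d Bd - imag_axis)"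
proof
  show "WX c d Om \<inter> imag_axis = WX c d Bd \<inter> imag_axis"
  proof
    show "WX c d Om \<inter> imag_axis \<subseteq> WX c d Bd \<inter> imag_axis"
    proof
      fix x assume x: "x \<in> WX c d Om \<inter> imag_axis"
      then obtain z where z: "x = Some z" "Re z = 0" unfolding imag_axis_def by auto
      then show "x \<in> WX c d Bd \<inter> imag_axis" using part_i x by auto
    qed
    show "WX c d Bd \<inter> imag_axis \<subseteq> WX c d Om \<inter> imag_axis" using WX_mono[OF Bd_sub] by blast
  qed
  show "riemann_sphere frontier_of (WX c d Om) - imag_axis = WX c d Bd - imag_axis"
  proof
    show "riemann_sphere frontier_of (WX c d Om) - imag_axis \<subseteq> WX c d Bd - imag_axis"
    proof
      fix x assume x: "x \<in> riemann_sphere frontier_of (WX c d Om) - imag_axis"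
      show "x \<in> WX c d Bd - imag_axis"
      proof (cases x)
        case None
        then show ?thesis using fr_None x imag_None by auto
      next
        case (Some z)
        then show ?thesis using fr_Some[of z] x imag_Some by auto
      qed
    qed
    show "WX c d Bd - imag_axis \<subseteq> riemann_sphere frontier_of (WX c d Om) - imag_axis"
    proof
      fix x assume x: "x \<in> WX c d Bd - imag_axis"
      show "x \<in> riemann_sphere frontier_of (WX c d Om) - imag_axis"
      proof (cases x)
        case None
        then show ?thesis using bd_None x imag_None by auto
      next
        case (Some z)
        then show ?thesis using bd_Some[of z] x imag_Some by auto
      qed
    qed
  qed
qed

end

theorem theorem2p9:
  fixes WA WB :: "real set" and c d :: real
  assumes c_nonneg: "c \<ge> 0" and d_pos: "d > 0"
    and WA_ne: "WA \<noteq> {}" and WA_int: "is_interval WA"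
    and WB_ne: "WB \<noteq> {}" and WB_int: "is_interval WB" and WB_bdd: "bounded WB"
    and WB_nz: "WB \<noteq> {0}"
  shows "(WX c d (closure (ereal ` WA) \<times> closure WB) \<inter> imag_axis =
           WX c d (rect_boundary (closure (ereal ` WA)) (closure WB)) \<inter> imag_axis)
    \<and> ((riemann_sphere frontier_of (WX c d (closure (ereal ` WA) \<times> closure WB))) - imag_axis =
           WX c d (rect_boundary (closure (ereal ` WA)) (closure WB)) - imag_axis)"
proof -
  obtain a where a: "a \<in> WA" using WA_ne by blast
  have i1: "Inf (ereal ` WA) \<le> ereal a" using a by (auto intro: Inf_lower)
  have i2: "ereal a \<le> Sup (ereal ` WA)" using a by (auto intro: Sup_upper)
  have bb: "bdd_below WB" "bdd_above WB"
    using WB_bdd by (auto simp: bounded_imp_bdd_below bounded_imp_bdd_above)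
  interpret wsetup c d "Inf (ereal ` WA)" "Sup (ereal ` WA)" "Inf WB" "Sup WB"
  proof
    show "c \<ge> 0" by fact
    show "d > 0" by fact
    show "Inf (ereal ` WA) \<le> Sup (ereal ` WA)" using i1 i2 by (rule order_trans)
    show "Inf (ereal ` WA) \<noteq> \<infinity>" using i1 by auto
    show "Sup (ereal ` WA) \<noteq> -\<infinity>" using i2 by auto
    show "Inf WB \<le> Sup WB" using cInf_le_cSup[OF WB_ne bb(2) bb(1)] .
  qed
  show ?thesis
    unfolding closure_WA[OF WA_int WA_ne] closure_WB[OF WB_int WB_bdd WB_ne]
    by (rule main)
qed

end
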